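(* The map $\Phi$ from labelled red and white trees to formal fractions is injective: for every $n$, $\Phi:\mathrm{RW}(n)\to\mathcal{FF}(n)$ is injective.
   Context: $\mathrm{RW}(n)$: finite rooted trees (children unordered) whose nodes $z$ carry possibly empty label sets $L(z)\subseteq[n]$ partitioning $[n]$, every empty node having at least two children; a labelled node is white, an empty node is red iff all its children are white, white otherwise. $\mathcal{FF}(n)$: reduced formal fractions whose numerator and denominator are products of symbols $[S]$, $\emptyset\ne S\subseteq[n]$ (free abelian group on these symbols). For a node $z$ of $T$, let $S(z)$ be the union of the label sets of all nodes in the subtree rooted at $z$, and let $E(z)=1/[S(z)]$ if $z$ is white, $E(z)=[S(z)]$ if $z$ is red and not the root, $E(z)=1$ if $z$ is red and the root. Then $\Phi(T)=\prod_{z}E(z)$ over all nodes $z$ of $T$. *)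

theory Defs
  imports Main "HOL-Library.Multiset"
begin

datatype rtree = Node (labels: "nat set") (kids: "rtree multiset")

primrec nodes :: "rtree \<Rightarrow> rtree multiset" where
  "nodes (Node L C) = {# Node L C #} + sum_mset (image_mset nodes C)"

primrec subtree_labels :: "rtree \<Rightarrow> nat set" where
  "subtree_labels (Node L C) = L \<union> \<Union> (set_mset (image_mset subtree_labels C))"

primrec is_red :: "rtree \<Rightarrow> bool" where
  "is_red (Node L C) = (L = {} \<and> True \<notin># image_mset is_red C)"

abbreviation is_white :: "rtree \<Rightarrow> bool" where
  "is_white z \<equiv> \<not> is_red z"

definition RW :: "nat \<Rightarrow> rtree set" where
  "RW n = {T. (\<forall>z \<in># nodes T. labels z \<subseteq> {1..n})
             \<and> (\<forall>i \<in> {1..n}. size (filter_mset (\<lambda>z. i \<in> labels z) (nodes T)) = 1)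
             \<and> (\<forall>z \<in># nodes T. labels z = {} \<longrightarrow> size (kids z) \<ge> 2)}"

text \<open>Elements of the free abelian group on the symbols [S] are represented by
their exponent vectors: a function assigning to each S the (integer) exponent of [S]
in the reduced fraction (numerator exponents positive, denominator negative).\<close>
type_synonym frac = "nat set \<Rightarrow> int"

definition FF :: "nat \<Rightarrow> frac set" where
  "FF n = {f. \<forall>S. f S \<noteq> 0 \<longrightarrow> S \<noteq> {} \<and> S \<subseteq> {1..n}}"

definition gen_sym :: "nat set \<Rightarrow> frac" where
  "gen_sym S = (\<lambda>X. if X = S then 1 else 0)"

text \<open>Contribution of all nodes of the subtree at z, z itself treated as a non-root:
white nodes give 1/[S(z)], red non-root nodes give [S(z)].\<close>
primrec phi_nonroot :: "rtree \<Rightarrow> frac" where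
  "phi_nonroot (Node L C) = (\<lambda>X.
      (if is_red (Node L C) then 1 else -1) * gen_sym (subtree_labels (Node L C)) X
      + sum_mset (image_mset (\<lambda>f. f X) (image_mset phi_nonroot C)))"

definition Phi :: "rtree \<Rightarrow> frac" where
  "Phi T = (\<lambda>X.
      (if is_red T then 0 else - gen_sym (subtree_labels T) X)
      + sum_mset (image_mset (\<lambda>c. phi_nonroot c X) (kids T)))"

end

theory Submission
  imports Defs
begin

definition cnt :: "nat \<Rightarrow> rtree \<Rightarrow> nat" where
  "cnt i t = size (filter_mset (\<lambda>z. i \<in> labels z) (nodes t))"

lemma size_filter_sum:
  "size (filter_mset P (sum_mset (image_mset f C))) = sum_mset (image_mset (\<lambda>c. size (filter_mset P (f c))) C)"
  by (induction C) auto

lemma cnt_Node: "cnt i (Node L C) = (if i \<in> L then 1 else 0) + sum_mset (image_mset (cnt i) C)"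
  unfolding cnt_def by (simp add: size_filter_sum)

lemma cnt_pos: "0 < cnt i t \<longleftrightarrow> i \<in> subtree_labels t"
proof (induction t)
  case (Node L C)
  have "0 < sum_mset (image_mset (cnt i) C) \<longleftrightarrow> (\<exists>c\<in>#C. 0 < cnt i c)"
    by (induction C) auto
  then show ?case using Node by (auto simp: cnt_Node)
qed

lemma sum_split: "c \<in># C \<Longrightarrow> (f c :: 'b::comm_monoid_add) + sum_mset (image_mset f (C - {#c#})) = sum_mset (image_mset f C)"
proof -
  assume "c \<in># C"
  then have "C = add_mset c (C - {#c#})" by simp
  then show ?thesis by (metis image_mset_add_mset sum_mset.add_mset)
qed

lemma sum_zero: "(\<forall>c\<in>#C. f c = 0) \<Longrightarrow> sum_mset (image_mset f C) = (0::'b::comm_monoid_add)"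
  by (induction C) auto

lemma nodes_kid: "c \<in># C \<Longrightarrow> z \<in># nodes c \<Longrightarrow> z \<in># nodes (Node L C)"
  by (auto simp: in_Union_mset_iff)

lemma nodes_self: "t \<in># nodes t"
  by (cases t) auto

definition good :: "rtree \<Rightarrow> bool" where
  "good t = ((\<forall>i. cnt i t \<le> 1) \<and> (\<forall>z\<in>#nodes t. labels z = {} \<longrightarrow> 2 \<le> size (kids z)))"

lemma good_kid: "good (Node L C) \<Longrightarrow> c \<in># C \<Longrightarrow> good c"
  unfolding good_def
proof (intro conjI allI ballI impI)
  fix i assume g: "(\<forall>i. cnt i (Node L C) \<le> 1) \<and> (\<forall>z\<in>#nodes (Node L C). labels z = {} \<longrightarrow> 2 \<le> size (kids z))"
    and c: "c \<in># C"
  have "cnt i c \<le> sum_mset (image_mset (cnt i) C)"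
    using sum_split[OF c, of "cnt i"] by linarith
  also have "\<dots> \<le> cnt i (Node L C)" by (simp add: cnt_Node)
  finally show "cnt i c \<le> 1" using g by (meson order_trans)
next
  fix z assume g: "(\<forall>i. cnt i (Node L C) \<le> 1) \<and> (\<forall>z\<in>#nodes (Node L C). labels z = {} \<longrightarrow> 2 \<le> size (kids z))"
    and c: "c \<in># C" and z: "z \<in># nodes c" and "labels z = {}"
  then show "2 \<le> size (kids z)" using nodes_kid[OF c z] by blast
qed

lemma good_root: "good (Node L C) \<Longrightarrow> L = {} \<Longrightarrow> 2 \<le> size C"
  unfolding good_def using nodes_self[of "Node L C"] by fastforce

lemma good_ne: "good t \<Longrightarrow> subtree_labels t \<noteq> {}"
proof (induction t)
  case (Node L C)
  show ?case
  proof (cases "L = {}")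
    case True
    then have "2 \<le> size C" using good_root Node.prems by blast
    then obtain c where c: "c \<in># C" by (metis multiset_nonemptyE not_numeral_le_zero size_empty)
    then have "subtree_labels c \<noteq> {}" using Node good_kid by blast
    then show ?thesis using c by auto
  qed auto
qed

lemma good_disj: "good (Node L C) \<Longrightarrow> c \<in># C \<Longrightarrow> d \<in># C - {#c#} \<Longrightarrow> subtree_labels c \<inter> subtree_labels d = {}"
proof (rule ccontr)
  assume g: "good (Node L C)" and c: "c \<in># C" and d: "d \<in># C - {#c#}"
    and "subtree_labels c \<inter> subtree_labels d \<noteq> {}"
  then obtain i where i: "i \<in> subtree_labels c" "i \<in> subtree_labels d" by blast
  have "cnt i c + (cnt i d + sum_mset (image_mset (cnt i) (C - {#c#} - {#d#}))) = sum_mset (image_mset (cnt i) C)"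
    using sum_split[OF c, of "cnt i"] sum_split[OF d, of "cnt i"] by simp
  moreover have "sum_mset (image_mset (cnt i) C) \<le> 1" using g unfolding good_def by (metis cnt_Node le_add2 order_trans)
  moreover have "0 < cnt i c" "0 < cnt i d" using i cnt_pos by auto
  ultimately show False by linarith
qed

lemma good_disjL: "good (Node L C) \<Longrightarrow> c \<in># C \<Longrightarrow> L \<inter> subtree_labels c = {}"
proof (rule ccontr)
  assume g: "good (Node L C)" and c: "c \<in># C" and "L \<inter> subtree_labels c \<noteq> {}"
  then obtain i where i: "i \<in> L" "i \<in> subtree_labels c" by blast
  have "cnt i c \<le> sum_mset (image_mset (cnt i) C)"
    using sum_split[OF c, of "cnt i"] by linarith
  moreover have "cnt i (Node L C) \<le> 1" using g unfolding good_def by blast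
  moreover have "0 < cnt i c" using i cnt_pos by auto
  moreover have "cnt i (Node L C) = 1 + sum_mset (image_mset (cnt i) C)" using i by (simp add: cnt_Node)
  ultimately show False by linarith
qed

lemma good_distinct: "good (Node L C) \<Longrightarrow> c \<in># C \<Longrightarrow> d \<in># C \<Longrightarrow> c \<noteq> d \<Longrightarrow> subtree_labels c \<inter> subtree_labels d = {}"
proof -
  assume a: "good (Node L C)" "c \<in># C" "d \<in># C" "c \<noteq> d"
  then have "d \<in># C - {#c#}" by (simp add: in_diff_count)
  then show ?thesis using good_disj a by blast
qed

lemma good_count: "good (Node L C) \<Longrightarrow> count C c \<le> 1"
proof (rule ccontr)
  assume g: "good (Node L C)" and "\<not> count C c \<le> 1"
  then have "count C c \<noteq> 0" by linarith
  then have "c \<in># C" using count_eq_zero_iff by metis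
  have "c \<in># C - {#c#}" using \<open>\<not> count C c \<le> 1\<close> by (simp add: in_diff_count)
  then have "subtree_labels c = {}" using good_disj[OF g \<open>c \<in># C\<close>] by blast
  then show False using good_ne good_kid g \<open>c \<in># C\<close> by blast
qed

primrec Svals :: "rtree \<Rightarrow> nat set set" where
  "Svals (Node L C) = insert (subtree_labels (Node L C)) (\<Union> (set_mset (image_mset Svals C)))"

lemma Svals_sub: "X \<in> Svals t \<Longrightarrow> X \<subseteq> subtree_labels t"
proof (induction t arbitrary: X)
  case (Node L C)
  then show ?case by fastforce
qed

lemma S_mem: "subtree_labels t \<in> Svals t"
  by (cases t) simp

lemma Svals_ne: "good t \<Longrightarrow> X \<in> Svals t \<Longrightarrow> X \<noteq> {}"
proof (induction t arbitrary: X)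
  case (Node L C)
  then show ?case using good_kid good_ne by fastforce
qed

lemma kid_sub: "c \<in># C \<Longrightarrow> subtree_labels c \<subseteq> subtree_labels (Node L C)"
  by auto

lemma kid_strict: "good (Node L C) \<Longrightarrow> c \<in># C \<Longrightarrow> subtree_labels c \<noteq> subtree_labels (Node L C)"
proof
  assume g: "good (Node L C)" and c: "c \<in># C" and eq: "subtree_labels c = subtree_labels (Node L C)"
  have "L \<subseteq> subtree_labels (Node L C)" by simp
  then have "L = {}" using good_disjL[OF g c] eq by blast
  then have "2 \<le> size C" using good_root g by blast
  moreover have "size C = Suc (size (C - {#c#}))" using c by (metis insert_DiffM size_add_mset)
  ultimately have "size (C - {#c#}) \<noteq> 0" by linarith
  then have "C - {#c#} \<noteq> {#}" by auto
  then obtain d where d: "d \<in># C - {#c#}" by (meson multiset_nonemptyE)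
  then have dC: "d \<in># C" by (meson in_diffD)
  have "subtree_labels d \<inter> subtree_labels c = {}" using good_disj[OF g c d] by blast
  moreover have "subtree_labels d \<subseteq> subtree_labels c" using eq kid_sub[OF dC] by simp
  moreover have "subtree_labels d \<noteq> {}" using good_ne good_kid[OF g dC] by blast
  ultimately show False by blast
qed

lemma kid_Svals: "good (Node L C) \<Longrightarrow> c \<in># C \<Longrightarrow> Svals c = {X \<in> Svals (Node L C). X \<subseteq> subtree_labels c}"
proof (intro equalityI subsetI)
  fix X assume g: "good (Node L C)" and c: "c \<in># C" and X: "X \<in> Svals c"
  then show "X \<in> {X \<in> Svals (Node L C). X \<subseteq> subtree_labels c}" using Svals_sub by auto
next
  fix X assume g: "good (Node L C)" and c: "c \<in># C" and X: "X \<in> {X \<in> Svals (Node L C). X \<subseteq> subtree_labels c}"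
  then have X1: "X \<in> Svals (Node L C)" and X2: "X \<subseteq> subtree_labels c" by auto
  have "X \<noteq> subtree_labels (Node L C)" using X2 kid_strict[OF g c] kid_sub[OF c] by blast
  then obtain d where d: "d \<in># C" "X \<in> Svals d" using X1 by auto
  show "X \<in> Svals c"
  proof (cases "d = c")
    case False
    then have "subtree_labels c \<inter> subtree_labels d = {}" using good_distinct[OF g c d(1)] by blast
    moreover have "X \<subseteq> subtree_labels d" using Svals_sub d by blast
    moreover have "X \<noteq> {}" using Svals_ne good_kid[OF g d(1)] d(2) by blast
    ultimately show ?thesis using X2 by blast
  qed (use d in auto)
qed

lemma kids_max: "good (Node L C) \<Longrightarrow>
  (X \<in> subtree_labels ` set_mset C) \<longleftrightarrow>
  (X \<in> Svals (Node L C) \<and> X \<noteq> subtree_labels (Node L C) \<and>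
   (\<forall>Y \<in> Svals (Node L C). Y \<noteq> subtree_labels (Node L C) \<longrightarrow> X \<subseteq> Y \<longrightarrow> Y = X))"
  (is "_ \<Longrightarrow> _ \<longleftrightarrow> ?R")
proof
  assume g: "good (Node L C)" and "X \<in> subtree_labels ` set_mset C"
  then obtain c where c: "c \<in># C" and X: "X = subtree_labels c" by blast
  show ?R
  proof (intro conjI ballI impI)
    show "X \<in> Svals (Node L C)" using c X S_mem by fastforce
    show "X \<noteq> subtree_labels (Node L C)" using kid_strict[OF g c] X by simp
    fix Y assume Y: "Y \<in> Svals (Node L C)" "Y \<noteq> subtree_labels (Node L C)" "X \<subseteq> Y"
    then obtain d where d: "d \<in># C" "Y \<in> Svals d" by auto
    have "Y \<subseteq> subtree_labels d" using Svals_sub d by blast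
    moreover have "X \<noteq> {}" using good_ne good_kid[OF g c] X by blast
    ultimately have "d = c" using good_distinct[OF g c d(1)] X Y(3) by blast
    then show "Y = X" using d Svals_sub X Y(3) by blast
  qed
next
  assume g: "good (Node L C)" and R: ?R
  then obtain d where d: "d \<in># C" "X \<in> Svals d" by auto
  have "subtree_labels d \<in> Svals (Node L C)" using d S_mem by fastforce
  moreover have "subtree_labels d \<noteq> subtree_labels (Node L C)" using kid_strict[OF g d(1)] .
  moreover have "X \<subseteq> subtree_labels d" using Svals_sub d by blast
  ultimately have "subtree_labels d = X" using R by blast
  then show "X \<in> subtree_labels ` set_mset C" using d by blast
qed

lemma unique: "good t1 \<Longrightarrow> good t2 \<Longrightarrow> Svals t1 = Svals t2 \<Longrightarrow> t1 = t2"
proof (induction t1 arbitrary: t2)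
  case (Node L1 C1)
  obtain L2 C2 where t2: "t2 = Node L2 C2" by (cases t2)
  have g1: "good (Node L1 C1)" and g2: "good (Node L2 C2)" using Node t2 by auto
  have SV: "Svals (Node L1 C1) = Svals (Node L2 C2)" using Node t2 by simp
  have SS: "subtree_labels (Node L1 C1) = subtree_labels (Node L2 C2)"
    using SV S_mem[of "Node L1 C1"] S_mem[of "Node L2 C2"] Svals_sub by (metis subset_antisym)
  have KK: "subtree_labels ` set_mset C1 = subtree_labels ` set_mset C2"
  proof -
    have "X \<in> subtree_labels ` set_mset C1 \<longleftrightarrow> X \<in> subtree_labels ` set_mset C2" for X
      using kids_max[OF g1, of X] kids_max[OF g2, of X] unfolding SV SS by simp
    then show ?thesis by blast
  qed
  have key: "c1 = c2" if c1: "c1 \<in># C1" and c2: "c2 \<in># C2" and eq: "subtree_labels c1 = subtree_labels c2" for c1 c2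
  proof -
    have "Svals c1 = Svals c2"
      by (simp only: kid_Svals[OF g1 c1] kid_Svals[OF g2 c2] SV eq)
    then show ?thesis using Node.IH[OF c1] good_kid[OF g1 c1] good_kid[OF g2 c2] by blast
  qed
  have setEq: "set_mset C1 = set_mset C2"
  proof (intro equalityI subsetI)
    fix c assume c: "c \<in> set_mset C1"
    then have "subtree_labels c \<in> subtree_labels ` set_mset C2" using KK by blast
    then obtain c2 where "c2 \<in># C2" "subtree_labels c = subtree_labels c2" by blast
    then show "c \<in> set_mset C2" using key c by blast
  next
    fix c assume c: "c \<in> set_mset C2"
    then have "subtree_labels c \<in> subtree_labels ` set_mset C1" using KK by blast
    then obtain c1 where "c1 \<in># C1" "subtree_labels c = subtree_labels c1" by blast
    then show "c \<in> set_mset C1" using key c by metis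
  qed
  have CC: "C1 = C2"
  proof (rule multiset_eqI)
    fix x
    have "count C1 x \<le> 1" "count C2 x \<le> 1" using good_count g1 g2 by auto
    moreover have "count C1 x = 0 \<longleftrightarrow> count C2 x = 0" using setEq by (metis count_eq_zero_iff)
    ultimately show "count C1 x = count C2 x" by linarith
  qed
  have L1: "L1 = subtree_labels (Node L1 C1) - \<Union> (subtree_labels ` set_mset C1)"
    using good_disjL[OF g1] unfolding subtree_labels.simps set_image_mset by blast
  have L2: "L2 = subtree_labels (Node L2 C2) - \<Union> (subtree_labels ` set_mset C2)"
    using good_disjL[OF g2] unfolding subtree_labels.simps set_image_mset by blast
  show ?case using L1 L2 SS CC t2 by metis
qed

lemma kids_sum:
  assumes g: "good (Node L C)"
    and H: "\<forall>c\<in>#C. \<forall>X. phi_nonroot c X \<noteq> 0 \<longleftrightarrow> X \<in> Svals c"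
  shows "(X = subtree_labels (Node L C) \<longrightarrow> sum_mset (image_mset (\<lambda>c. phi_nonroot c X) C) = 0)
    \<and> (X \<noteq> subtree_labels (Node L C) \<longrightarrow> (sum_mset (image_mset (\<lambda>c. phi_nonroot c X) C) \<noteq> 0 \<longleftrightarrow> X \<in> Svals (Node L C)))"
proof (cases "\<exists>c\<in>#C. X \<in> Svals c")
  case False
  then have "sum_mset (image_mset (\<lambda>c. phi_nonroot c X) C) = 0"
    using H by (intro sum_zero) blast
  then show ?thesis using False by auto
next
  case True
  then obtain c where c: "c \<in># C" "X \<in> Svals c" by blast
  have ne: "X \<noteq> S" if "S = subtree_labels (Node L C)" for S
    using c Svals_sub kid_strict[OF g c(1)] kid_sub[OF c(1)] that by blast
  have others: "\<forall>d\<in># C - {#c#}. phi_nonroot d X = 0"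
  proof
    fix d assume d: "d \<in># C - {#c#}"
    have "d \<noteq> c" using good_count[OF g, of c] d by (auto simp: in_diff_count)
    have dC: "d \<in># C" using d by (meson in_diffD)
    have "X \<notin> Svals d"
    proof
      assume "X \<in> Svals d"
      then have "X \<subseteq> subtree_labels d" using Svals_sub by blast
      moreover have "X \<subseteq> subtree_labels c" using Svals_sub c by blast
      moreover have "X \<noteq> {}" using Svals_ne good_kid[OF g c(1)] c by blast
      ultimately show False using good_disj[OF g c(1) d] by blast
    qed
    then show "phi_nonroot d X = 0" using H dC by blast
  qed
  have "sum_mset (image_mset (\<lambda>c. phi_nonroot c X) C) = phi_nonroot c X"
    using sum_split[OF c(1), of "\<lambda>c. phi_nonroot c X"] sum_zero[OF others] by simp
  then show ?thesis using H c ne by auto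
qed

lemma phi_iff: "good c \<Longrightarrow> phi_nonroot c X \<noteq> 0 \<longleftrightarrow> X \<in> Svals c"
proof (induction c arbitrary: X)
  case (Node L C)
  have H: "\<forall>c\<in>#C. \<forall>X. phi_nonroot c X \<noteq> 0 \<longleftrightarrow> X \<in> Svals c"
    using Node good_kid by blast
  note K = kids_sum[OF Node.prems H, of X]
  show ?case
  proof (cases "X = subtree_labels (Node L C)")
    case True
    then show ?thesis using K by (simp add: gen_sym_def image_mset.compositionality o_def del: subtree_labels.simps is_red.simps)
  next
    case False
    then show ?thesis using K by (simp add: gen_sym_def image_mset.compositionality o_def del: subtree_labels.simps is_red.simps)
  qed
qed

lemma Phi_svals: "good T \<Longrightarrow> Svals T = insert (subtree_labels T) {X. Phi T X \<noteq> 0}"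
proof -
  assume g: "good T"
  obtain L C where T: "T = Node L C" by (cases T)
  have H: "\<forall>c\<in>#C. \<forall>X. phi_nonroot c X \<noteq> 0 \<longleftrightarrow> X \<in> Svals c"
    using g T good_kid phi_iff by blast
  have "X \<in> Svals T \<longleftrightarrow> X \<in> insert (subtree_labels T) {X. Phi T X \<noteq> 0}" for X
  proof (cases "X = subtree_labels T")
    case True then show ?thesis using S_mem by auto
  next
    case False
    then show ?thesis using kids_sum[OF g[unfolded T] H, of X] T
      by (simp add: Phi_def gen_sym_def del: subtree_labels.simps is_red.simps Svals.simps)
  qed
  then show ?thesis by blast
qed

lemma RW_good: "T \<in> RW n \<Longrightarrow> good T \<and> subtree_labels T = {1..n}"
proof -
  assume T: "T \<in> RW n"
  have c1: "cnt i T = 1" if "i \<in> {1..n}" for i using T that unfolding RW_def cnt_def by blast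
  have c0: "cnt i T = 0" if "i \<notin> {1..n}" for i
  proof -
    have "\<forall>z\<in>#nodes T. i \<notin> labels z" using T that unfolding RW_def by blast
    then show ?thesis unfolding cnt_def by (simp add: filter_mset_eq_mempty_iff)
  qed
  have "\<forall>i. cnt i T \<le> 1" using c1 c0 by (metis le_refl zero_le)
  moreover have "\<forall>z\<in>#nodes T. labels z = {} \<longrightarrow> 2 \<le> size (kids z)" using T unfolding RW_def by blast
  moreover have "subtree_labels T = {1..n}"
    using c1 c0 cnt_pos by (metis less_numeral_extra(1) less_numeral_extra(3) subsetI subset_antisym)
  ultimately show ?thesis unfolding good_def by blast
qed

theorem mainTheorem9:
  fixes n :: nat
  shows "Phi ` RW n \<subseteq> FF n \<and> inj_on Phi (RW n)"
proof
  show "Phi ` RW n \<subseteq> FF n"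
  proof (intro subsetI)
    fix f assume "f \<in> Phi ` RW n"
    then obtain T where T: "T \<in> RW n" and f: "f = Phi T" by blast
    show "f \<in> FF n" unfolding FF_def f
    proof (intro CollectI allI impI)
    fix S assume S: "Phi T S \<noteq> 0"
    have g: "good T" and ST: "subtree_labels T = {1..n}" using RW_good[OF T] by auto
    have "S \<in> Svals T" using Phi_svals[OF g] S by blast
    then show "S \<noteq> {} \<and> S \<subseteq> {1..n}" using Svals_ne[OF g] Svals_sub ST by blast
    qed
  qed
  show "inj_on Phi (RW n)"
  proof (rule inj_onI)
    fix T1 T2 assume T1: "T1 \<in> RW n" and T2: "T2 \<in> RW n" and eq: "Phi T1 = Phi T2"
    have "Svals T1 = Svals T2"
      using Phi_svals RW_good[OF T1] RW_good[OF T2] eq by simp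
    then show "T1 = T2" using unique RW_good[OF T1] RW_good[OF T2] by blast
  qed
qed

end
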